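(* Let $h_1,h_2:(0,\infty)\to\mathbb{R}$ be convex. Then (i) $\partial X(h_1,h_2)\setminus C(h_1,h_2)\subseteq\operatorname{supp}(h_2)$, and (ii) $\partial X(h_2,h_1)\setminus C(h_1,h_2)\subseteq\operatorname{supp}(h_1)$.
   Context: Boundaries are taken in the space $(0,\infty)$. $X(h_1,h_2):=\{x>0:h_1(x)<h_2(x)\}$. $\operatorname{supp}(h):=\{x>0:\text{for every open }U\ni x,\ h|_U\text{ is not affine}\}$. $C(h_1,h_2)$ is the set of simple crossing points: those $x>0$ for which there is $r>1$ with either $(xr^{-1},x)\subseteq X(h_1,h_2)$ and $(x,xr)\subseteq X(h_2,h_1)$, or $(xr^{-1},x)\subseteq X(h_2,h_1)$ and $(x,xr)\subseteq X(h_1,h_2)$. *)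

theory Defs
  imports "HOL-Analysis.Analysis"
begin

definition Xset :: "(real \<Rightarrow> real) \<Rightarrow> (real \<Rightarrow> real) \<Rightarrow> real set" where
  "Xset h1 h2 = {x. x > 0 \<and> h1 x < h2 x}"

definition affine_on_pos :: "(real \<Rightarrow> real) \<Rightarrow> real set \<Rightarrow> bool" where
  "affine_on_pos h U = (\<exists>a b. \<forall>y\<in>U \<inter> {0<..}. h y = a * y + b)"

text \<open>Neighbourhoods are open sets of the space (0,inf), i.e. U \<inter> (0,inf) for U open in R.\<close>
definition supp :: "(real \<Rightarrow> real) \<Rightarrow> real set" where
  "supp h = {x. x > 0 \<and> (\<forall>U. open U \<and> x \<in> U \<longrightarrow> \<not> affine_on_pos h U)}"

definition Cset :: "(real \<Rightarrow> real) \<Rightarrow> (real \<Rightarrow> real) \<Rightarrow> real set" where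
  "Cset h1 h2 = {x. x > 0 \<and> (\<exists>r>1.
      ({x / r<..<x} \<subseteq> Xset h1 h2 \<and> {x<..<x * r} \<subseteq> Xset h2 h1) \<or>
      ({x / r<..<x} \<subseteq> Xset h2 h1 \<and> {x<..<x * r} \<subseteq> Xset h1 h2))}"

definition bdry :: "real set \<Rightarrow> real set" where
  "bdry S = (top_of_set {0<..}) frontier_of S"

end

theory Submission
  imports Defs
begin
lemma closure_pos1: "(x::real) \<in> top_of_set {0<..} closure_of S \<Longrightarrow> x \<in> topspace (top_of_set {0<..})"
  unfolding in_closure_of by (rule conjunct1)

lemma closure_pos: "(x::real) \<in> top_of_set {0<..} closure_of S \<Longrightarrow> x > 0"
  using closure_pos1[of x S] by (simp only: topspace_euclidean_subtopology greaterThan_iff)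

lemma bdry_pos:
  assumes "x \<in> bdry S"
  shows "x > 0"
proof -
  have fr: "x \<in> top_of_set {0<..} closure_of S - top_of_set {0<..} interior_of S"
    using assms unfolding bdry_def frontier_of_def .
  have cl: "x \<in> top_of_set {0<..} closure_of S" using fr by (rule DiffD1)
  show "x > 0" using cl by (rule closure_pos)
qed

lemma bdry_cl:
  assumes "x \<in> bdry S" "e > 0"
  shows "\<exists>y\<in>S. dist y x < e"
proof -
  have fr: "x \<in> top_of_set {0<..} closure_of S - top_of_set {0<..} interior_of S"
    using assms(1) unfolding bdry_def frontier_of_def .
  have cl: "x \<in> top_of_set {0<..} closure_of S" using fr by (rule DiffD1)
  have x0: "x > 0" using cl by (rule closure_pos)
  have cl2: "\<forall>T. x \<in> T \<and> openin (top_of_set {0<..}) T \<longrightarrow> (\<exists>y. y \<in> S \<and> y \<in> T)"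
    using cl unfolding in_closure_of by (rule conjunct2)
  have op: "openin (top_of_set {0<..}) ({0<..} \<inter> ball x e)"
    by (rule openin_open_Int) simp
  have xin: "x \<in> {0<..} \<inter> ball x e" using x0 assms(2) by simp
  have "\<exists>y. y \<in> S \<and> y \<in> {0<..} \<inter> ball x e"
    using cl2[rule_format, OF conjI[OF xin op]] .
  then obtain y where "y \<in> S" "y \<in> ball x e" by blast
  then show ?thesis by (auto simp: dist_commute)
qed

lemma bdry_ncl:
  assumes "x \<in> bdry S" "e > 0"
  shows "\<exists>y. y > 0 \<and> dist y x < e \<and> y \<notin> S"
proof (rule ccontr)
  assume na: "\<not> ?thesis"
  have fr: "x \<in> top_of_set {0<..} closure_of S - top_of_set {0<..} interior_of S"
    using assms(1) unfolding bdry_def frontier_of_def .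
  have cl: "x \<in> top_of_set {0<..} closure_of S" using fr by (rule DiffD1)
  have x0: "x > 0" using cl by (rule closure_pos)
  have ni: "x \<notin> top_of_set {0<..} interior_of S" using fr by simp
  have sub: "{0<..} \<inter> ball x e \<subseteq> S"
  proof
    fix y assume "y \<in> {0<..} \<inter> ball x e"
    then have "y > 0" "dist y x < e" by (auto simp: dist_commute)
    then show "y \<in> S" using na by blast
  qed
  have op: "openin (top_of_set {0<..}) ({0<..} \<inter> ball x e)"
    by (rule openin_open_Int) simp
  have xin: "x \<in> {0<..} \<inter> ball x e" using x0 assms(2) by simp
  have "x \<in> top_of_set {0<..} interior_of S" unfolding interior_of_def
    using op xin sub by blast
  with ni show False by simp
qed

lemmas bdry_facts = bdry_pos bdry_cl bdry_ncl

lemma cvx3: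
  fixes f :: "real \<Rightarrow> real"
  assumes "convex_on {0<..} f" "0 < z" "z < m" "m < w"
  shows "(w - z) * f m \<le> (w - m) * f z + (m - z) * f w"
proof -
  define t where "t = (m - z) / (w - z)"
  have t0: "t \<ge> 0" "t \<le> 1" using assms by (auto simp: t_def field_simps)
  have e: "t * (w - z) = m - z" using assms by (simp add: t_def)
  have aux: "(1 - t) * z + t * w = z + t * (w - z)" by (simp add: algebra_simps)
  have mt: "m = (1 - t) *\<^sub>R z + t *\<^sub>R w" unfolding real_scaleR_def using e aux by linarith
  have "f m \<le> (1 - t) * f z + t * f w"
    using convex_onD[OF assms(1) t0] assms mt by auto
  then have "(w - z) * f m \<le> (w - z) * ((1 - t) * f z + t * f w)"
    using assms by (intro mult_left_mono) auto
  also have "\<dots> = ((w - z) * (1 - t)) * f z + (t * (w - z)) * f w"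
    by (simp add: algebra_simps)
  also have "\<dots> = (w - m) * f z + (m - z) * f w"
  proof -
    have aux2: "(w - z) * (1 - t) = (w - z) - t * (w - z)" by (simp add: algebra_simps)
    have e2: "(w - z) * (1 - t) = w - m" using e aux2 by linarith
    show ?thesis by (simp only: e e2)
  qed
  finally show ?thesis .
qed

lemma Cset_sym: "Cset h1 h2 = Cset h2 h1"
  unfolding Cset_def by (simp add: disj_commute)

lemma main:
  fixes f h :: "real \<Rightarrow> real"
  assumes cf: "convex_on {0<..} f" and xb: "x \<in> bdry (Xset f h)" and ns: "x \<notin> supp h"
  shows "x \<in> Cset f h"
proof -
  note B = bdry_facts[OF xb]
  have x0: "x > 0" by (rule B(1))
  obtain U where U: "open U" "x \<in> U" "affine_on_pos h U" using ns x0 unfolding supp_def by blast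
  obtain a b where hU: "\<forall>y\<in>U \<inter> {0<..}. h y = a * y + b" using U(3) unfolding affine_on_pos_def by blast
  obtain d0 where d0: "d0 > 0" "ball x d0 \<subseteq> U" using U open_contains_ball by blast
  define d where "d = min d0 (x/2)"
  have d: "d > 0" "d < x" using d0 x0 by (auto simp: d_def)
  have hI: "h y = a * y + b" "y > 0" if "dist y x < d" for y
  proof -
    have "y \<in> ball x d0" using that by (auto simp: d_def dist_commute)
    moreover show "y > 0" using that d by (auto simp: dist_real_def)
    ultimately show "h y = a * y + b" using hU d0 by auto
  qed
  define k where "k y = f y - (a * y + b)" for y
  have kc: "(w - z) * k m \<le> (w - m) * k z + (m - z) * k w" if "0 < z" "z < m" "m < w" for z m w
  proof -
    have "(w - z) * f m \<le> (w - m) * f z + (m - z) * f w" by (rule cvx3[OF cf that])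
    moreover have "(w - z) * (a * m + b) = (w - m) * (a * z + b) + (m - z) * (a * w + b)"
      by (simp add: algebra_simps)
    ultimately show ?thesis unfolding k_def by (simp add: algebra_simps)
  qed
  have XS1: "y \<in> Xset f h \<longleftrightarrow> k y < 0" and XS2: "y \<in> Xset h f \<longleftrightarrow> k y > 0"
    if "dist y x < d" for y
    using hI[OF that] by (auto simp: Xset_def k_def)
  have "continuous_on {0<..} f" by (rule convex_on_continuous[OF _ cf]) simp
  then have "isCont f x" using x0 by (simp add: continuous_on_eq_continuous_at)
  then have ck: "isCont k x" unfolding k_def by (intro continuous_intros)
  have kx1: "k x \<ge> 0"
  proof (rule ccontr)
    assume "\<not> ?thesis"
    then have e0: "- k x > 0" by simp
    obtain del where del: "del > 0" "\<forall>y. dist y x < del \<longrightarrow> dist (k y) (k x) < - k x"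
      using ck[unfolded continuous_at_eps_delta, rule_format, OF e0] by blast
    obtain y where y: "y > 0" "dist y x < min del d" "y \<notin> Xset f h" using B(3)[of "min del d"] del d by auto
    then have "k y < 0" using del by (auto simp: dist_real_def)
    then show False using XS1[of y] y by auto
  qed
  have kx2: "k x \<le> 0"
  proof (rule ccontr)
    assume "\<not> ?thesis"
    then have e0: "k x > 0" by simp
    obtain del where del: "del > 0" "\<forall>y. dist y x < del \<longrightarrow> dist (k y) (k x) < k x"
      using ck[unfolded continuous_at_eps_delta, rule_format, OF e0] by blast
    obtain y where y: "y \<in> Xset f h" "dist y x < min del d" using B(2)[of "min del d"] del d by auto
    then have "k y > 0" using del by (auto simp: dist_real_def)
    then show False using XS1[of y] y by auto
  qed
  have kx: "k x = 0" using kx1 kx2 by simp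
  obtain y where y: "y \<in> Xset f h" "dist y x < d" using B(2)[of d] d by auto
  have ky: "k y < 0" using XS1 y by auto
  have y0: "y > 0" using hI(2) y(2) by auto
  have yx: "y \<noteq> x" using ky kx by auto
  show ?thesis
  proof (cases "y > x")
    case True
    define r where "r = min (x/(x-d)) (y/x)"
    have "1 < x / (x - d)" "1 < y / x" using True d x0 by (auto simp: less_divide_eq_1)
    then have r1: "r > 1" by (simp add: r_def)
    have "(x - d) * r \<le> (x - d) * (x/(x-d))" using d by (intro mult_left_mono) (auto simp: r_def)
    then have "(x - d) * r \<le> x" using d by simp
    then have xr1: "x - d \<le> x / r" using r1 by (simp add: le_divide_eq)
    have "x * r \<le> x * (y / x)" using x0 by (intro mult_left_mono) (auto simp: r_def)
    then have xr2: "x * r \<le> y" using x0 by simp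
    have yd: "y < x + d" using y(2) by (simp add: dist_real_def)
    have A1: "{x / r<..<x} \<subseteq> Xset h f"
    proof
      fix z assume z: "z \<in> {x / r<..<x}"
      then have dz: "dist z x < d" using xr1 d by (auto simp: dist_real_def)
      have z0: "z > 0" using hI(2)[OF dz] .
      have "(y - z) * k x \<le> (y - x) * k z + (x - z) * k y" using kc[OF z0, of x y] z True by auto
      moreover have "(x - z) * k y < 0" using z ky by (intro mult_pos_neg) auto
      ultimately have "(y - x) * k z > 0" using kx by simp
      then have "k z > 0" using True by (simp add: zero_less_mult_iff)
      then show "z \<in> Xset h f" using XS2[OF dz] by simp
    qed
    have A2: "{x<..<x * r} \<subseteq> Xset f h"
    proof
      fix m assume m: "m \<in> {x<..<x * r}"
      then have dm: "dist m x < d" using xr2 yd by (auto simp: dist_real_def)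
      have "(y - x) * k m \<le> (y - m) * k x + (m - x) * k y" using kc[OF x0, of m y] m xr2 by auto
      moreover have "(m - x) * k y < 0" using m ky by (intro mult_pos_neg) auto
      ultimately have "(y - x) * k m < 0" using kx by simp
      then have "k m < 0" using True by (simp add: mult_less_0_iff)
      then show "m \<in> Xset f h" using XS1[OF dm] by simp
    qed
    have "\<exists>r>1. ({x / r<..<x} \<subseteq> Xset f h \<and> {x<..<x * r} \<subseteq> Xset h f) \<or>
      ({x / r<..<x} \<subseteq> Xset h f \<and> {x<..<x * r} \<subseteq> Xset f h)"
      using r1 A1 A2 by (intro exI[of _ r]) simp
    then show ?thesis using x0 unfolding Cset_def by simp
  next
    case False
    then have yl: "y < x" using yx by simp
    define r where "r = min ((x+d)/x) (x/y)"
    have "1 < (x + d) / x" "1 < x / y" using yl d x0 y0 by (auto simp: less_divide_eq_1)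
    then have r1: "r > 1" by (simp add: r_def)
    have "y * r \<le> y * (x / y)" using y0 by (intro mult_left_mono) (auto simp: r_def)
    then have "y * r \<le> x" using y0 by simp
    then have xr1: "y \<le> x / r" using r1 by (simp add: le_divide_eq)
    have "x * r \<le> x * ((x+d)/x)" using x0 by (intro mult_left_mono) (auto simp: r_def)
    then have xr2: "x * r \<le> x + d" using x0 by simp
    have yd: "y > x - d" using y(2) by (simp add: dist_real_def)
    have A1: "{x / r<..<x} \<subseteq> Xset f h"
    proof
      fix m assume m: "m \<in> {x / r<..<x}"
      then have dm: "dist m x < d" using xr1 yd by (auto simp: dist_real_def)
      have "(x - y) * k m \<le> (x - m) * k y + (m - y) * k x" using kc[OF y0, of m x] m xr1 by auto
      moreover have "(x - m) * k y < 0" using m ky by (intro mult_pos_neg) auto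
      ultimately have "(x - y) * k m < 0" using kx by simp
      then have "k m < 0" using yl by (simp add: mult_less_0_iff)
      then show "m \<in> Xset f h" using XS1[OF dm] by simp
    qed
    have A2: "{x<..<x * r} \<subseteq> Xset h f"
    proof
      fix z assume z: "z \<in> {x<..<x * r}"
      then have dz: "dist z x < d" using xr2 d by (auto simp: dist_real_def)
      have "(z - y) * k x \<le> (z - x) * k y + (x - y) * k z" using kc[OF y0, of x z] z yl by auto
      moreover have "(z - x) * k y < 0" using z ky by (intro mult_pos_neg) auto
      ultimately have "(x - y) * k z > 0" using kx by simp
      then have "k z > 0" using yl by (simp add: zero_less_mult_iff)
      then show "z \<in> Xset h f" using XS2[OF dz] by simp
    qed
    have "\<exists>r>1. ({x / r<..<x} \<subseteq> Xset f h \<and> {x<..<x * r} \<subseteq> Xset h f) \<or>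
      ({x / r<..<x} \<subseteq> Xset h f \<and> {x<..<x * r} \<subseteq> Xset f h)"
      using r1 A1 A2 by (intro exI[of _ r]) simp
    then show ?thesis using x0 unfolding Cset_def by simp
  qed
qed

theorem proposition6p4:
  fixes h1 h2 :: "real \<Rightarrow> real"
  assumes "convex_on {0<..} h1" and "convex_on {0<..} h2"
  shows "bdry (Xset h1 h2) - Cset h1 h2 \<subseteq> supp h2 \<and>
         bdry (Xset h2 h1) - Cset h1 h2 \<subseteq> supp h1"
proof
  show "bdry (Xset h1 h2) - Cset h1 h2 \<subseteq> supp h2"
  proof
    fix x assume x: "x \<in> bdry (Xset h1 h2) - Cset h1 h2"
    show "x \<in> supp h2"
    proof (rule ccontr)
      assume "x \<notin> supp h2"
      then have "x \<in> Cset h1 h2" using main[OF assms(1), of x h2] x by blast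
      then show False using x by simp
    qed
  qed
  show "bdry (Xset h2 h1) - Cset h1 h2 \<subseteq> supp h1"
  proof
    fix x assume x: "x \<in> bdry (Xset h2 h1) - Cset h1 h2"
    show "x \<in> supp h1"
    proof (rule ccontr)
      assume "x \<notin> supp h1"
      then have "x \<in> Cset h2 h1" using main[OF assms(2), of x h1] x by blast
      then show False using x Cset_sym[of h1 h2] by simp
    qed
  qed
qed

end
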